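(* Let $n\ge 2$, let $\mathbf{e}_1,\dots,\mathbf{e}_n$ be the standard basis of $\mathbb{R}^n$, $\mathbf{v}_1=(1,\dots,1)^T$, and define $\mathbf{e}_i'=\frac{1-\sqrt{n+1}}{n}\mathbf{v}_1+\sqrt{n+1}\,\mathbf{e}_i$ for $i=1,\dots,n$. Then the lattice $\mathcal{L}\subset\mathbb{R}^n$ with basis $\{\mathbf{e}_1',\dots,\mathbf{e}_n'\}$ is tame, with Lagrangian basis $\{\mathbf{e}_i'\}$, vector $\mathbf{v}_1$, and $(a,h)=(n,1)$. Moreover, for every integer $r$ with $0<|r|<n$, $\mathcal{L}_{\mathbf{v}_1}^{(r,r)}$ is a sublattice of $\mathcal{L}$ with $\mathcal{L}_{\mathbf{v}_1}^{(r,r)}\cong|r|\sqrt{n+1}\,A_n$.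
   Context: Tame lattice: a full-rank lattice $\mathcal{L}\subset\mathbb{R}^n$ with a basis $\{\mathbf{e}_1,\dots,\mathbf{e}_n\}$ (Lagrangian basis) and nonzero $\mathbf{v}_1\in\mathcal{L}\cap\mathcal{L}^*$ such that $\sum_i\mathbf{e}_i=\mathbf{v}_1$, $\langle\mathbf{e}_i,\mathbf{v}_1\rangle=1$, $\langle\mathbf{e}_i,\mathbf{e}_i\rangle=a$, $\langle\mathbf{e}_i,\mathbf{e}_j\rangle=-h$ ($i\ne j$). $\mathcal{L}^{(r,s)}_{\mathbf{v}_1}$ is the image of $\mathcal{L}$ under $\mathbf{x}\mapsto r\mathbf{x}+s\langle\mathbf{x},\mathbf{v}_1\rangle\mathbf{v}_1$. $A_n=\{\mathbf{x}\in\mathbb{Z}^{n+1}:\sum_i x_i=0\}$. $\Lambda\cong\Lambda'$ means there is a linear isometry between the real spans carrying one lattice onto the other; $c\Lambda$ denotes scaling by $c>0$. *)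

theory Defs
  imports "HOL-Analysis.Analysis"
begin

definition lattice_gen :: "('i::finite \<Rightarrow> 'a::real_vector) \<Rightarrow> 'a set" where
  "lattice_gen b = {(\<Sum>i\<in>UNIV. of_int (k i) *\<^sub>R b i) | k. True}"

definition is_lattice_basis :: "(real^'n) set \<Rightarrow> ('n::finite \<Rightarrow> real^'n) \<Rightarrow> bool" where
  "is_lattice_basis L b \<longleftrightarrow> inj b \<and> independent (range b) \<and> L = lattice_gen b"

definition dual_lattice :: "('a::real_inner) set \<Rightarrow> 'a set" where
  "dual_lattice L = {x \<in> span L. \<forall>y\<in>L. inner x y \<in> \<int>}"

definition tame_wrt :: "(real^'n) set \<Rightarrow> ('n::finite \<Rightarrow> real^'n) \<Rightarrow> real^'n \<Rightarrow> real \<Rightarrow> real \<Rightarrow> bool" where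
  "tame_wrt L e v1 a h \<longleftrightarrow>
     is_lattice_basis L e \<and> v1 \<noteq> 0 \<and> v1 \<in> L \<inter> dual_lattice L \<and>
     (\<Sum>i\<in>UNIV. e i) = v1 \<and>
     (\<forall>i. inner (e i) v1 = 1) \<and>
     (\<forall>i. inner (e i) (e i) = a) \<and>
     (\<forall>i j. i \<noteq> j \<longrightarrow> inner (e i) (e j) = - h)"

definition lattice_rs :: "real \<Rightarrow> real \<Rightarrow> 'a::real_inner \<Rightarrow> 'a set \<Rightarrow> 'a set" where
  "lattice_rs r s v L = (\<lambda>x. r *\<^sub>R x + (s * inner x v) *\<^sub>R v) ` L"

text \<open>A_n realised in real^('n option), a type of cardinality CARD('n)+1.\<close>
definition A_lattice :: "(real^('n::finite option)) set" where
  "A_lattice = {x. (\<forall>i. x $ i \<in> \<int>) \<and> (\<Sum>i\<in>UNIV. x $ i) = 0}"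

definition scale_set :: "real \<Rightarrow> 'a::real_vector set \<Rightarrow> 'a set" where
  "scale_set c L = (\<lambda>x. c *\<^sub>R x) ` L"

definition lattice_iso :: "('a::real_inner) set \<Rightarrow> ('b::real_inner) set \<Rightarrow> bool" where
  "lattice_iso L M \<longleftrightarrow> (\<exists>f. linear f \<and> (\<forall>x\<in>span L. norm (f x) = norm x) \<and> f ` L = M)"

end

theory Submission imports Defs begin

lemma sum_UNIV_option: "(\<Sum>x\<in>(UNIV::'a::finite option set). f x) = f None + (\<Sum>i\<in>UNIV. f (Some i))"
  by (simp add: UNIV_option_conv sum.reindex)

lemma sum_if_eq: "(\<Sum>j\<in>(UNIV::'a::finite set). (if j = i then (a::real) else 0)) = a"
  by simp

lemma part1:
  fixes v1 :: "real^'n::finite" and e' :: "'n \<Rightarrow> real^'n"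
  assumes v1: "v1 = (\<chi> i. 1)"
    and e: "\<And>i. e' i = c *\<^sub>R v1 + s *\<^sub>R axis i 1"
    and Nc: "real CARD('n) * c + s = 1" and s0: "s \<noteq> 0"
  shows "\<And>i j. e' i $ j = c + (if j = i then s else 0)"
    and "\<And>g i. (\<Sum>j\<in>UNIV. g j *\<^sub>R e' j) $ i = c * sum g UNIV + s * g i"
    and "\<And>x. inner x v1 = (\<Sum>i\<in>UNIV. x $ i)"
    and "\<And>g. (\<Sum>i\<in>UNIV. (\<Sum>j\<in>UNIV. g j *\<^sub>R e' j) $ i) = sum g UNIV"
proof -
  show ei: "\<And>i j. e' i $ j = c + (if j = i then s else 0)"
    by (simp add: e v1 axis_def)
  show comp: "\<And>g i. (\<Sum>j\<in>UNIV. g j *\<^sub>R e' j) $ i = c * sum g UNIV + s * g i"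
  proof -
    fix g i
    have "(\<Sum>j\<in>UNIV. g j *\<^sub>R e' j) $ i = (\<Sum>j\<in>UNIV. g j * c + (if i = j then s * g j else 0))"
      by (auto simp add: sum_component ei algebra_simps intro!: sum.cong)
    also have "\<dots> = c * sum g UNIV + s * g i"
      by (simp add: sum.distrib sum_distrib_left mult.commute)
    finally show "(\<Sum>j\<in>UNIV. g j *\<^sub>R e' j) $ i = c * sum g UNIV + s * g i" .
  qed
  show "\<And>x. inner x v1 = (\<Sum>i\<in>UNIV. x $ i)"
    by (simp add: inner_vec_def v1)
  show "\<And>g. (\<Sum>i\<in>UNIV. (\<Sum>j\<in>UNIV. g j *\<^sub>R e' j) $ i) = sum g UNIV"
  proof -
    fix g :: "'n \<Rightarrow> real"
    have "(\<Sum>i\<in>UNIV. (\<Sum>j\<in>UNIV. g j *\<^sub>R e' j) $ i) = (\<Sum>i\<in>UNIV. c * sum g UNIV + s * g i)"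
      using comp by presburger
    also have "\<dots> = (real CARD('n) * c + s) * sum g UNIV"
      by (simp add: sum.distrib sum_distrib_left[symmetric] algebra_simps)
    finally show "(\<Sum>i\<in>UNIV. (\<Sum>j\<in>UNIV. g j *\<^sub>R e' j) $ i) = sum g UNIV" using Nc by simp
  qed
qed

lemma gram_sum:
  "(\<Sum>k\<in>(UNIV::'n::finite set). (c + (if k = i then s else 0)) * (c + (if k = j then s else 0)))
     = real CARD('n) * c * c + 2 * c * s + (if i = j then s * s else (0::real))"
proof -
  have "(\<Sum>k\<in>(UNIV::'n set). (c + (if k = i then s else 0)) * (c + (if k = j then s else 0)))
     = (\<Sum>k\<in>(UNIV::'n set). c * c + (if k = i then c * s else 0) + (if k = j then c * s else 0)
          + (if k = i then (if i = j then s * s else 0) else 0))"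
    by (auto intro!: sum.cong simp: algebra_simps)
  also have "\<dots> = real CARD('n) * c * c + 2 * c * s + (if i = j then s * s else (0::real))"
    by (simp add: sum.distrib)
  finally show ?thesis .
qed

lemma tame_part:
  fixes L :: "(real^'n::finite) set" and v1 :: "real^'n" and e' :: "'n \<Rightarrow> real^'n"
  assumes v1: "v1 = (\<chi> i. 1)"
    and e: "\<And>i. e' i = c *\<^sub>R v1 + s *\<^sub>R axis i 1"
    and Nc: "real CARD('n) * c + s = 1" and s0: "s \<noteq> 0"
    and ss: "s * s = real CARD('n) + 1"
    and L: "L = lattice_gen e'"
  shows "tame_wrt L e' v1 (real CARD('n)) 1"
proof -
  note P = part1[OF v1 e Nc s0]
  have N0: "real CARD('n) > 0" by simp
  have inj: "inj e'"
  proof (rule injI)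
    fix i j assume "e' i = e' j"
    then have "e' i $ i = e' j $ i" by simp
    then show "i = j" using s0 by (auto simp: P(1) split: if_splits)
  qed
  have indep: "independent (range e')"
  proof (rule independent_if_scalars_zero)
    show "finite (range e')" by simp
    fix f x assume h: "(\<Sum>x\<in>range e'. f x *\<^sub>R x) = 0" and x: "x \<in> range e'"
    define g where "g j = f (e' j)" for j
    have h2: "(\<Sum>j\<in>UNIV. g j *\<^sub>R e' j) = 0"
      using h by (simp add: sum.reindex[OF inj] g_def)
    have G: "sum g UNIV = 0" using P(4)[of g] h2 by simp
    from x obtain j where j: "x = e' j" by auto
    have "(\<Sum>j\<in>UNIV. g j *\<^sub>R e' j) $ j = 0" using h2 by simp
    then have "s * g j = 0" using P(2)[of g j] G by simp
    then show "f x = 0" using s0 j g_def by simp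
  qed
  have sumv: "(\<Sum>i\<in>UNIV. e' i) = v1"
  proof -
    have "(\<Sum>i\<in>UNIV. (\<lambda>_. 1) i *\<^sub>R e' i) = v1"
      unfolding vec_eq_iff using P(2)[of "\<lambda>_. 1"] Nc by (simp add: v1 mult.commute)
    then show ?thesis by simp
  qed
  have v1L: "v1 \<in> L"
  proof -
    have "v1 = (\<Sum>i\<in>UNIV. of_int ((\<lambda>_. 1) i) *\<^sub>R e' i)" using sumv by simp
    then show ?thesis unfolding L lattice_gen_def
      by (intro CollectI exI[of _ "\<lambda>_. 1"]) simp
  qed
  have v1D: "v1 \<in> dual_lattice L"
    unfolding dual_lattice_def
  proof (intro CollectI conjI ballI)
    show "v1 \<in> span L" using v1L by (rule span_base)
    fix y assume "y \<in> L"
    then obtain k where y: "y = (\<Sum>i\<in>UNIV. of_int (k i) *\<^sub>R e' i)" unfolding L lattice_gen_def by blast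
    have "inner v1 y = inner y v1" by (simp add: inner_commute)
    also have "\<dots> = (\<Sum>i\<in>UNIV. y $ i)" by (rule P(3))
    also have "\<dots> = (\<Sum>i\<in>UNIV. real_of_int (k i))" using P(4)[of "\<lambda>i. of_int (k i)"] y by simp
    finally show "inner v1 y \<in> \<int>" by (simp add: Ints_sum)
  qed
  have v10: "v1 \<noteq> 0"
  proof
    assume "v1 = 0" then have "v1 $ undefined = 0" by simp
    then show False by (simp add: v1)
  qed
  have key: "real CARD('n) * c * c + 2 * c * s = -1"
  proof -
    have "real CARD('n) * c * c + 2 * c * s = c * (real CARD('n) * c + s) + c * s" by (simp add: algebra_simps)
    also have "\<dots> = c * (1 + s)" using Nc by (simp add: algebra_simps)
    also have "\<dots> = -1"
    proof -
      have "c = (1 - s) / real CARD('n)" using Nc N0 by (simp add: field_simps)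
      then have "c * (1 + s) = (1 - s * s) / real CARD('n)" by (simp add: algebra_simps)
      also have "\<dots> = -1" using ss N0 by simp
      finally show ?thesis .
    qed
    finally show ?thesis .
  qed
  have gram: "\<And>i j. inner (e' i) (e' j) = real CARD('n) * c * c + 2 * c * s + (if i = j then s * s else 0)"
    by (simp add: inner_vec_def P(1) gram_sum)
  have inner1: "\<And>i. inner (e' i) v1 = 1"
  proof -
    fix i
    have "inner (e' i) v1 = (\<Sum>j\<in>UNIV. c + (if j = i then s else 0))"
      by (simp add: P(3) P(1))
    also have "\<dots> = real CARD('n) * c + s" by (simp add: sum.distrib)
    finally show "inner (e' i) v1 = 1" using Nc by simp
  qed
  show ?thesis unfolding tame_wrt_def is_lattice_basis_def
    using inj indep L v10 v1L v1D sumv inner1 gram key ss by auto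
qed

lemma aux_field: "(q::real) \<noteq> 0 \<Longrightarrow> (s / q * (s / q) - 2 * (t / q) + N * (t / q) * (t / q)) * (q * q) = s * s - 2 * t * q + N * t * t"
  by (simp add: field_simps)

lemma r_part:
  fixes L :: "(real^'n::finite) set" and v1 :: "real^'n" and e' :: "'n \<Rightarrow> real^'n" and r :: int
  assumes v1: "v1 = (\<chi> i. 1)"
    and e: "\<And>i. e' i = c *\<^sub>R v1 + s *\<^sub>R axis i 1"
    and Nc: "real CARD('n) * c + s = 1" and s0: "s \<noteq> 0"
    and ss: "s * s = real CARD('n) + 1"
    and L: "L = lattice_gen e'"
    and r0: "r \<noteq> 0"
  shows "lattice_rs (of_int r) (of_int r) v1 L \<subseteq> L \<and>
       lattice_iso (lattice_rs (of_int r) (of_int r) v1 L)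
         (scale_set (of_int \<bar>r\<bar> * s) (A_lattice :: (real^('n option)) set))"
proof -
  note P = part1[OF v1 e Nc s0]
  define N where "N = real CARD('n)"
  have N0: "N > 0" by (simp add: N_def)
  define \<phi> where "\<phi> y = of_int r *\<^sub>R y + (of_int r * inner y v1) *\<^sub>R v1" for y :: "real^'n"
  have LRS: "lattice_rs (of_int r) (of_int r) v1 L = \<phi> ` L" by (simp add: lattice_rs_def \<phi>_def)
  have yfacts: "\<And>i. y $ i = c * (\<Sum>j\<in>UNIV. real_of_int (k j)) + s * real_of_int (k i)"
     "inner y v1 = (\<Sum>j\<in>UNIV. real_of_int (k j))"
     "\<phi> y $ i = of_int r * (c * (\<Sum>j\<in>UNIV. real_of_int (k j)) + s * real_of_int (k i))
                 + of_int r * (\<Sum>j\<in>UNIV. real_of_int (k j))"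
    if y: "y = (\<Sum>j\<in>UNIV. of_int (k j) *\<^sub>R e' j)" for y k i
  proof -
    show yi: "\<And>i. y $ i = c * (\<Sum>j\<in>UNIV. real_of_int (k j)) + s * real_of_int (k i)"
      unfolding y by (rule P(2))
    show yv: "inner y v1 = (\<Sum>j\<in>UNIV. real_of_int (k j))"
      unfolding y by (simp only: P(3) P(4))
    show "\<phi> y $ i = of_int r * (c * (\<Sum>j\<in>UNIV. real_of_int (k j)) + s * real_of_int (k i))
                 + of_int r * (\<Sum>j\<in>UNIV. real_of_int (k j))"
      unfolding \<phi>_def yv by (simp add: v1 yi)
  qed
  have sub: "\<phi> ` L \<subseteq> L"
  proof
    fix z assume "z \<in> \<phi> ` L"
    then obtain y where z: "z = \<phi> y" and "y \<in> L" by auto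
    then obtain k where y: "y = (\<Sum>j\<in>UNIV. of_int (k j) *\<^sub>R e' j)" unfolding L lattice_gen_def by blast
    define K where "K = (\<Sum>j\<in>UNIV. k j)"
    define k2 where "k2 j = r * k j + r * K" for j
    have "\<phi> y = (\<Sum>j\<in>UNIV. of_int (k2 j) *\<^sub>R e' j)"
    proof (subst vec_eq_iff, intro allI)
      fix i
      have s2: "(\<Sum>j\<in>UNIV. real_of_int (k2 j)) = of_int r * of_int K + N * (of_int r * of_int K)"
        by (simp add: k2_def sum.distrib sum_distrib_left[symmetric] K_def N_def)
      have "(\<Sum>j\<in>UNIV. of_int (k2 j) *\<^sub>R e' j) $ i = c * (\<Sum>j\<in>UNIV. real_of_int (k2 j)) + s * real_of_int (k2 i)"
        by (rule P(2))
      also have "\<dots> = of_int r * (c * of_int K + s * of_int (k i)) + of_int r * of_int K"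
      proof -
        have h: "real_of_int K * real_of_int r * (s + c * real CARD('n)) = real_of_int K * real_of_int r"
          using Nc by (simp add: add.commute mult.commute)
        show ?thesis using h unfolding s2 by (simp add: k2_def N_def algebra_simps)
      qed
      finally show "\<phi> y $ i = (\<Sum>j\<in>UNIV. of_int (k2 j) *\<^sub>R e' j) $ i"
        using yfacts(3)[OF y, of i] by (simp add: K_def)
    qed
    then show "z \<in> L" unfolding z L lattice_gen_def by blast
  qed
  define S where "S x = (\<Sum>i\<in>UNIV. x $ i)" for x :: "real^'n"
  define d where "d = (c + 1) / (N + 1)"
  define F where "F x = ((\<chi> p. (case p of None \<Rightarrow> - (s / (N + 1)) * S x | Some i \<Rightarrow> x $ i - d * S x)) :: real^('n option))"
    for x :: "real^'n"
  have linF: "linear F"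
  proof (rule linearI)
    fix x y show "F (x + y) = F x + F y"
      unfolding vec_eq_iff
      by (auto simp: F_def S_def sum.distrib algebra_simps split: option.split)
  next
    fix a :: real and x show "F (a *\<^sub>R x) = a *\<^sub>R F x"
      unfolding vec_eq_iff
      by (auto simp: F_def S_def sum_distrib_left sum_divide_distrib sum_negf algebra_simps split: option.split)
  qed
  have Q: "(N + 1) - 2 * (c + 1) * (N + 1) + N * (c + 1) * (c + 1) = 0"
  proof -
    have Nt: "N * (c + 1) = N + 1 - s" using Nc by (simp add: N_def algebra_simps)
    have "N * ((N + 1) - 2 * (c + 1) * (N + 1) + N * (c + 1) * (c + 1))
          = N * (N + 1) - 2 * (N + 1) * (N * (c + 1)) + (N * (c + 1)) * (N * (c + 1))"
      by (simp add: algebra_simps)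
    also have "\<dots> = N * (N + 1) - 2 * (N + 1) * (N + 1 - s) + (N + 1 - s) * (N + 1 - s)"
      by (simp only: Nt)
    also have "\<dots> = N * (N + 1) - (N + 1) * (N + 1) + s * s"
      by (simp add: algebra_simps)
    also have "\<dots> = 0" using ss by (simp add: N_def algebra_simps)
    finally show ?thesis using N0 by simp
  qed
  have B: "s / (N + 1) * (s / (N + 1)) - 2 * d + N * d * d = 0"
  proof -
    have N1: "N + 1 \<noteq> 0" using N0 by simp
    have ss': "s * s = N + 1" using ss by (simp add: N_def)
    have "(s / (N + 1) * (s / (N + 1)) - 2 * d + N * d * d) * ((N + 1) * (N + 1))
        = s * s - 2 * (c + 1) * (N + 1) + N * (c + 1) * (c + 1)"
      using aux_field[OF N1, of s "c + 1" N] unfolding d_def by simp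
    also have "\<dots> = 0" using Q ss' by simp
    finally show ?thesis using N1 by simp
  qed
  have normF: "norm (F x) = norm x" for x
  proof -
    have sq: "(\<Sum>i\<in>UNIV. (x $ i - d * S x) * (x $ i - d * S x))
        = (\<Sum>i\<in>UNIV. x $ i * x $ i) - 2 * d * S x * S x + N * (d * S x) * (d * S x)"
    proof -
      have "(\<Sum>i\<in>UNIV. (x $ i - d * S x) * (x $ i - d * S x))
          = (\<Sum>i\<in>UNIV. x $ i * x $ i - (2 * d * S x) * x $ i + (d * S x) * (d * S x))"
        by (simp add: algebra_simps)
      also have "\<dots> = (\<Sum>i\<in>UNIV. x $ i * x $ i) - (2 * d * S x) * S x + N * (d * S x) * (d * S x)"
        by (simp add: sum.distrib sum_subtractf sum_distrib_left[symmetric] S_def N_def)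
      finally show ?thesis .
    qed
    have "inner (F x) (F x) = (s / (N + 1) * S x) * (s / (N + 1) * S x)
            + (\<Sum>i\<in>UNIV. (x $ i - d * S x) * (x $ i - d * S x))"
      by (simp add: inner_vec_def sum_UNIV_option F_def)
    also have "\<dots> = (\<Sum>i\<in>UNIV. x $ i * x $ i) + S x * S x * (s / (N + 1) * (s / (N + 1)) - 2 * d + N * d * d)"
      unfolding sq by (simp add: algebra_simps)
    also have "\<dots> = inner x x" unfolding B by (simp add: inner_vec_def)
    finally show ?thesis by (simp add: norm_eq_sqrt_inner)
  qed
  have Fphi: "F (\<phi> y) = (of_int r * s) *\<^sub>R (\<chi> p. (case p of None \<Rightarrow> - (\<Sum>j\<in>UNIV. real_of_int (k j)) | Some i \<Rightarrow> real_of_int (k i)))"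
    if y: "y = (\<Sum>j\<in>UNIV. of_int (k j) *\<^sub>R e' j)" for y k
  proof -
    define K where "K = (\<Sum>j\<in>UNIV. real_of_int (k j))"
    have pc: "\<And>i. \<phi> y $ i = of_int r * (c * K + s * real_of_int (k i)) + of_int r * K"
      using yfacts(3)[OF y] by (simp add: K_def)
    have Sphi: "S (\<phi> y) = of_int r * K * (N + 1)"
    proof -
      have "S (\<phi> y) = (\<Sum>i\<in>UNIV. of_int r * c * K + of_int r * K + of_int r * s * real_of_int (k i))"
        unfolding S_def pc by (simp add: algebra_simps)
      also have "\<dots> = of_int r * K * (N * c + s) + N * of_int r * K"
        by (simp add: sum.distrib sum_distrib_left[symmetric] K_def N_def algebra_simps)
      also have "\<dots> = of_int r * K + N * of_int r * K" unfolding N_def Nc by simp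
      finally show ?thesis by (simp add: algebra_simps)
    qed
    have dN: "d * (N + 1) = c + 1" using N0 by (simp add: d_def)
    show ?thesis unfolding vec_eq_iff
    proof
      fix p show "F (\<phi> y) $ p = ((of_int r * s) *\<^sub>R (\<chi> p. (case p of None \<Rightarrow> - (\<Sum>j\<in>UNIV. real_of_int (k j)) | Some i \<Rightarrow> real_of_int (k i)))) $ p"
      proof (cases p)
        case None
        then show ?thesis using N0 by (simp add: F_def Sphi K_def[symmetric])
      next
        case (Some i)
        have "\<phi> y $ i - d * S (\<phi> y) = of_int r * s * real_of_int (k i)"
        proof -
          have "d * (of_int r * K * (N + 1)) = (d * (N + 1)) * (of_int r * K)" by (simp only: mult_ac)
          also have "\<dots> = (c + 1) * (of_int r * K)" by (simp only: dN)
          finally have h: "d * (of_int r * K * (N + 1)) = (c + 1) * (of_int r * K)" .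
          show ?thesis unfolding Sphi pc h by (simp add: algebra_simps)
        qed
        then show ?thesis using Some by (simp add: F_def)
      qed
    qed
  qed
  define sg where "sg = real_of_int (sgn r)"
  have sgsg: "sg * sg = 1" using r0 by (simp add: sg_def sgn_if)
  have sgr: "of_int r * sg = real_of_int \<bar>r\<bar>" using r0 by (simp add: sg_def sgn_if)
  have sgInt: "sg \<in> \<int>" by (simp add: sg_def)
  have img: "F ` (\<phi> ` L) = scale_set (of_int \<bar>r\<bar> * s) (A_lattice :: (real^('n option)) set)"
  proof
    show "F ` (\<phi> ` L) \<subseteq> scale_set (of_int \<bar>r\<bar> * s) (A_lattice :: (real^('n option)) set)"
    proof
      fix z assume "z \<in> F ` (\<phi> ` L)"
      then obtain y where z: "z = F (\<phi> y)" and "y \<in> L" by auto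
      then obtain k where y: "y = (\<Sum>j\<in>UNIV. of_int (k j) *\<^sub>R e' j)" unfolding L lattice_gen_def by blast
      define w :: "real^('n option)" where "w = (\<chi> p. (case p of None \<Rightarrow> - (\<Sum>j\<in>UNIV. real_of_int (k j)) | Some i \<Rightarrow> real_of_int (k i)))"
      have zw: "z = (of_int r * s) *\<^sub>R w" unfolding z w_def by (rule Fphi[OF y])
      have "(sg *\<^sub>R w) \<in> A_lattice"
        unfolding A_lattice_def
      proof (intro CollectI conjI allI)
        fix p show "(sg *\<^sub>R w) $ p \<in> \<int>"
          using sgInt by (cases p) (auto simp: w_def Ints_sum)
      next
        show "(\<Sum>p\<in>UNIV. (sg *\<^sub>R w) $ p) = 0"
          by (simp add: sum_UNIV_option w_def sum_distrib_left)
      qed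
      moreover have "z = (of_int \<bar>r\<bar> * s) *\<^sub>R (sg *\<^sub>R w)"
        unfolding zw sgr[symmetric] using sgsg by (simp add: algebra_simps)
      ultimately show "z \<in> scale_set (of_int \<bar>r\<bar> * s) (A_lattice :: (real^('n option)) set)"
        unfolding scale_set_def by blast
    qed
  next
    show "scale_set (of_int \<bar>r\<bar> * s) (A_lattice :: (real^('n option)) set) \<subseteq> F ` (\<phi> ` L)"
    proof
      fix z assume "z \<in> scale_set (of_int \<bar>r\<bar> * s) (A_lattice :: (real^('n option)) set)"
      then obtain a :: "real^('n option)" where z: "z = (of_int \<bar>r\<bar> * s) *\<^sub>R a" and a: "a \<in> A_lattice"
        unfolding scale_set_def by blast
      have aint: "\<And>p. a $ p \<in> \<int>" and asum: "(\<Sum>p\<in>UNIV. a $ p) = 0"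
        using a by (auto simp: A_lattice_def)
      have afl: "\<And>p. a $ p = of_int \<lfloor>a $ p\<rfloor>" using aint by (metis Ints_cases floor_of_int)
      define k where "k i = sgn r * \<lfloor>a $ Some i\<rfloor>" for i
      define y where "y = (\<Sum>j\<in>UNIV. of_int (k j) *\<^sub>R e' j)"
      have yL: "y \<in> L" unfolding y_def L lattice_gen_def by blast
      have kr: "\<And>i. real_of_int (k i) = sg * a $ Some i"
        by (simp add: k_def sg_def afl[symmetric])
      have aN: "a $ None = - (\<Sum>i\<in>UNIV. a $ Some i)" using asum by (simp add: sum_UNIV_option algebra_simps)
      have "F (\<phi> y) = (of_int r * s) *\<^sub>R (\<chi> p. (case p of None \<Rightarrow> - (\<Sum>j\<in>UNIV. real_of_int (k j)) | Some i \<Rightarrow> real_of_int (k i)))"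
        by (rule Fphi[OF y_def])
      also have "(\<chi> p. (case p of None \<Rightarrow> - (\<Sum>j\<in>UNIV. real_of_int (k j)) | Some i \<Rightarrow> real_of_int (k i))) = sg *\<^sub>R a"
        unfolding vec_eq_iff
      proof
        fix p show "(\<chi> p. (case p of None \<Rightarrow> - (\<Sum>j\<in>UNIV. real_of_int (k j)) | Some i \<Rightarrow> real_of_int (k i))) $ p = (sg *\<^sub>R a) $ p"
          by (cases p) (simp_all add: kr aN sum_distrib_left[symmetric])
      qed
      also have "(of_int r * s) *\<^sub>R (sg *\<^sub>R a) = z"
        unfolding z sgr[symmetric] using sgsg by (simp add: algebra_simps)
      finally show "z \<in> F ` (\<phi> ` L)" using yL by blast
    qed
  qed
  show ?thesis
    unfolding LRS lattice_iso_def using sub linF normF img by blast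
qed


theorem mainTheorem8:
  fixes L :: "(real^'n::finite) set" and v1 :: "real^'n" and e' :: "'n \<Rightarrow> real^'n"
  assumes "CARD('n) \<ge> 2"
    and "v1 = (\<chi> i. 1)"
    and "\<And>i. e' i = ((1 - sqrt (real CARD('n) + 1)) / real CARD('n)) *\<^sub>R v1
                     + sqrt (real CARD('n) + 1) *\<^sub>R axis i 1"
    and "L = lattice_gen e'"
  shows "tame_wrt L e' v1 (real CARD('n)) 1 \<and>
    (\<forall>r::int. 0 < \<bar>r\<bar> \<and> \<bar>r\<bar> < int CARD('n) \<longrightarrow>
       lattice_rs (of_int r) (of_int r) v1 L \<subseteq> L \<and>
       lattice_iso (lattice_rs (of_int r) (of_int r) v1 L)
         (scale_set (of_int \<bar>r\<bar> * sqrt (real CARD('n) + 1)) (A_lattice :: (real^('n option)) set)))"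
proof -
  have N0: "real CARD('n) > 0" by simp
  have Nc: "real CARD('n) * ((1 - sqrt (real CARD('n) + 1)) / real CARD('n)) + sqrt (real CARD('n) + 1) = 1"
    using N0 by simp
  have s0: "sqrt (real CARD('n) + 1) \<noteq> 0" by simp
  have ss: "sqrt (real CARD('n) + 1) * sqrt (real CARD('n) + 1) = real CARD('n) + 1" by simp
  show ?thesis
    using tame_part[OF assms(2,3) Nc s0 ss assms(4)] r_part[OF assms(2,3) Nc s0 ss assms(4)]
    by auto
qed

end
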